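(* Let $\Delta\geq 2$ be an integer and let $G$ be a connected bipartite graph of maximum degree at most $\Delta$. Then $$\alpha(G)\geq \frac{1}{2}\left(1+\frac{1}{2(\Delta-1)}\right)\mathrm{diss}(G)-\frac{1}{2(\Delta-1)}.$$
   Context: All graphs are finite, simple and undirected. $\alpha(G)$ is the independence number. A set $D$ of vertices is a dissociation set if the induced subgraph $G[D]$ has maximum degree at most $1$; $\mathrm{diss}(G)$ is the maximum order of a dissociation set. *)

theory Defs
  imports Complex_Main
begin

definition simple_graph :: "'a set \<Rightarrow> ('a \<Rightarrow> 'a \<Rightarrow> bool) \<Rightarrow> bool" where
  "simple_graph V E \<longleftrightarrow> finite V \<and> (\<forall>u v. E u v \<longrightarrow> u \<in> V \<and> v \<in> V)
     \<and> (\<forall>u v. E u v \<longrightarrow> E v u) \<and> (\<forall>v. \<not> E v v)"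

definition degree :: "'a set \<Rightarrow> ('a \<Rightarrow> 'a \<Rightarrow> bool) \<Rightarrow> 'a \<Rightarrow> nat" where
  "degree V E v = card {u \<in> V. E v u}"

definition max_degree_le :: "'a set \<Rightarrow> ('a \<Rightarrow> 'a \<Rightarrow> bool) \<Rightarrow> nat \<Rightarrow> bool" where
  "max_degree_le V E d \<longleftrightarrow> (\<forall>v \<in> V. degree V E v \<le> d)"

definition connected_graph :: "'a set \<Rightarrow> ('a \<Rightarrow> 'a \<Rightarrow> bool) \<Rightarrow> bool" where
  "connected_graph V E \<longleftrightarrow> V \<noteq> {} \<and> (\<forall>u \<in> V. \<forall>v \<in> V. E\<^sup>*\<^sup>* u v)"

definition bipartite :: "'a set \<Rightarrow> ('a \<Rightarrow> 'a \<Rightarrow> bool) \<Rightarrow> bool" where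
  "bipartite V E \<longleftrightarrow> (\<exists>A B. A \<union> B = V \<and> A \<inter> B = {} \<and>
      (\<forall>u v. E u v \<longrightarrow> (u \<in> A \<and> v \<in> B) \<or> (u \<in> B \<and> v \<in> A)))"

definition independent_set :: "'a set \<Rightarrow> ('a \<Rightarrow> 'a \<Rightarrow> bool) \<Rightarrow> 'a set \<Rightarrow> bool" where
  "independent_set V E S \<longleftrightarrow> S \<subseteq> V \<and> (\<forall>u \<in> S. \<forall>v \<in> S. \<not> E u v)"

definition dissociation_set :: "'a set \<Rightarrow> ('a \<Rightarrow> 'a \<Rightarrow> bool) \<Rightarrow> 'a set \<Rightarrow> bool" where
  "dissociation_set V E S \<longleftrightarrow> S \<subseteq> V \<and> (\<forall>v \<in> S. card {u \<in> S. E v u} \<le> 1)"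

definition independence_number :: "'a set \<Rightarrow> ('a \<Rightarrow> 'a \<Rightarrow> bool) \<Rightarrow> nat" where
  "independence_number V E = Max (card ` {S. independent_set V E S})"

definition dissociation_number :: "'a set \<Rightarrow> ('a \<Rightarrow> 'a \<Rightarrow> bool) \<Rightarrow> nat" where
  "dissociation_number V E = Max (card ` {S. dissociation_set V E S})"

end

theory Submission
  imports Defs
begin

definition conn :: "('a \<Rightarrow> 'a \<Rightarrow> bool) \<Rightarrow> 'a set \<Rightarrow> 'a \<Rightarrow> 'a \<Rightarrow> bool" where
  "conn E S = (\<lambda>x y. E x y \<and> x \<in> S \<and> y \<in> S)\<^sup>*\<^sup>*"

lemma conn_refl: "conn E S x x"
  unfolding conn_def by simp

lemma conn_sym:
  assumes sym: "\<forall>u v. E u v \<longrightarrow> E v u" and c: "conn E S x y"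
  shows "conn E S y x"
proof -
  have "symp (\<lambda>x y. E x y \<and> x \<in> S \<and> y \<in> S)"
    using sym by (auto intro: sympI)
  then show ?thesis using c unfolding conn_def
    by (meson sympD symp_rtranclp)
qed

lemma conn_trans: "conn E S x y \<Longrightarrow> conn E S y z \<Longrightarrow> conn E S x z"
  unfolding conn_def by (meson rtranclp_trans)

lemma conn_mem: "conn E S x y \<Longrightarrow> x \<noteq> y \<Longrightarrow> y \<in> S"
  unfolding conn_def by (induction rule: rtranclp_induct) auto

lemma conn_step: "conn E S x y \<Longrightarrow> E y z \<Longrightarrow> y \<in> S \<Longrightarrow> z \<in> S \<Longrightarrow> conn E S x z"
  unfolding conn_def by (simp add: rtranclp.rtrancl_into_rtrancl)

lemma conn_insert:
  assumes sym: "\<forall>u v. E u v \<longrightarrow> E v u"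
    and c: "conn E (insert v S) x y" and x: "x \<in> S"
  shows "conn E S x y \<or> (\<exists>u. u \<in> S \<and> E v u \<and> conn E S x u)"
  using c unfolding conn_def
proof (induction rule: rtranclp_induct)
  case base
  then show ?case by simp
next
  case (step y z)
  from step.IH show ?case
  proof
    assume cy: "(\<lambda>x y. E x y \<and> x \<in> S \<and> y \<in> S)\<^sup>*\<^sup>* x y"
    have yS: "y \<in> S"
      using conn_mem[of E S x y] cy x unfolding conn_def by blast
    show ?case
    proof (cases "z \<in> S")
      case True
      then show ?thesis using cy yS step(2) by (simp add: rtranclp.rtrancl_into_rtrancl)
    next
      case False
      then have "z = v" using step(2) by auto
      then show ?thesis using cy yS step(2) sym by blast
    qed
  next
    assume "\<exists>u. u \<in> S \<and> E v u \<and> (\<lambda>x y. E x y \<and> x \<in> S \<and> y \<in> S)\<^sup>*\<^sup>* x u"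
    then show ?case by blast
  qed
qed

lemma comp_bound:
  assumes sg: "simple_graph V E" and cg: "connected_graph V E"
    and md: "max_degree_le V E \<Delta>" and D1: "\<Delta> \<ge> 1"
    and fR: "finite R"
  shows "R \<subseteq> V \<Longrightarrow> T \<subseteq> V - R \<Longrightarrow> (\<forall>t\<in>T. \<forall>t'\<in>T. conn E (V - R) t t' \<longrightarrow> t = t')
     \<Longrightarrow> card T \<le> 1 + (\<Delta> - 1) * card R"
  using fR
proof (induction R arbitrary: T rule: finite_induct)
  have fin: "finite V" and sym: "\<forall>u v. E u v \<longrightarrow> E v u" and inV: "\<forall>u v. E u v \<longrightarrow> u \<in> V \<and> v \<in> V"
    using sg unfolding simple_graph_def by auto
  {
  case empty
  have "\<forall>t\<in>T. \<forall>t'\<in>T. t = t'"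
  proof (intro ballI)
    fix t t' assume tt: "t \<in> T" "t' \<in> T"
    have "E\<^sup>*\<^sup>* t t'" using cg tt empty.prems(2) unfolding connected_graph_def by auto
    moreover have "(\<lambda>x y. E x y \<and> x \<in> V \<and> y \<in> V) = E" using inV by (auto intro!: ext)
    ultimately have "conn E (V - {}) t t'" unfolding conn_def by simp
    then show "t = t'" using empty.prems(3) tt by blast
  qed
  moreover have "finite T" using empty.prems(2) fin finite_subset by blast
  ultimately show ?case using card_le_Suc0_iff_eq by fastforce
  }
next
  have fin: "finite V" and sym: "\<forall>u v. E u v \<longrightarrow> E v u" and inV: "\<forall>u v. E u v \<longrightarrow> u \<in> V \<and> v \<in> V"
    using sg unfolding simple_graph_def by auto
  case (insert v R')
  define S where "S = V - insert v R'"
  have vS: "v \<notin> S" by (simp add: S_def)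
  have S': "V - R' = insert v S" using insert.prems(1) insert.hyps(2) unfolding S_def by auto
  have TS: "T \<subseteq> S" using insert.prems(2) S_def by simp
  have finT: "finite T" using TS fin S_def finite_subset by blast
  have pw: "\<forall>t\<in>T. \<forall>t'\<in>T. conn E S t t' \<longrightarrow> t = t'" using insert.prems(3) S_def by simp
  define N where "N = {u \<in> V. E v u}"
  have cN: "card N \<le> \<Delta>" using md insert.prems(1) unfolding N_def max_degree_le_def degree_def by auto
  have finN: "finite N" using fin N_def by simp
  define T1 where "T1 = {t\<in>T. \<exists>u. u \<in> S \<and> E v u \<and> conn E S t u}"
  define g where "g t = (SOME u. u \<in> S \<and> E v u \<and> conn E S t u)" for t
  have g: "g t \<in> S \<and> E v (g t) \<and> conn E S t (g t)" if "t \<in> T1" for t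
    using that unfolding T1_def g_def by (metis (mono_tags, lifting) mem_Collect_eq someI_ex)
  have "inj_on g T1"
  proof (rule inj_onI)
    fix a b assume ab: "a \<in> T1" "b \<in> T1" "g a = g b"
    have "conn E S a b" using g[OF ab(1)] g[OF ab(2)] ab(3) conn_sym[OF sym] conn_trans by metis
    then show "a = b" using pw ab T1_def by auto
  qed
  moreover have "g ` T1 \<subseteq> N" using g inV unfolding N_def by blast
  ultimately have cT1: "card T1 \<le> \<Delta>" using card_inj_on_le[OF _ _ finN] cN by fastforce
  have T1T: "T1 \<subseteq> T" unfolding T1_def by auto
  show ?case
  proof (cases "T1 = {}")
    case True
    define T' where "T' = insert v T"
    have "T' \<subseteq> V - R'" using S' TS T'_def by auto
    moreover have "\<forall>t\<in>T'. \<forall>t'\<in>T'. conn E (V - R') t t' \<longrightarrow> t = t'"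
    proof (intro ballI impI)
      fix t t' assume tt: "t \<in> T'" "t' \<in> T'" and c: "conn E (V - R') t t'"
      have noN: "\<not> conn E S t u" if "t \<in> T" "u \<in> S" "E v u" for t u
        using True that unfolding T1_def by auto
      have A: "t = t'" if "t \<in> T" "t' \<in> T" "conn E (insert v S) t t'" for t t'
        using conn_insert[OF sym that(3)] that TS noN pw by (meson subsetD)
      have B: False if "t \<in> T" "conn E (insert v S) t v" for t
      proof -
        have tS: "t \<in> S" using that TS by blast
        from conn_insert[OF sym that(2) tS]
        have "conn E S t v"
        proof (rule disjE)
          assume "\<exists>u. u \<in> S \<and> E v u \<and> conn E S t u"
          then obtain u where "u \<in> S" "E v u" "conn E S t u" by blast
          then show ?thesis using noN[OF that(1)] by blast
        qed
        moreover have "t \<noteq> v" using tS vS by blast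
        ultimately have "v \<in> S" using conn_mem by metis
        then show False using vS by simp
      qed
      show "t = t'"
      proof (cases "t = v")
        case tv: True
        show ?thesis
        proof (cases "t' = v")
          case True then show ?thesis using tv by simp
        next
          case False
          then have "t' \<in> T" using tt T'_def by simp
          moreover have "conn E (insert v S) t' v" using c tv S' conn_sym[OF sym] by metis
          ultimately show ?thesis using B by blast
        qed
      next
        case tv: False
        then have tT: "t \<in> T" using tt T'_def by simp
        show ?thesis
        proof (cases "t' = v")
          case True
          then show ?thesis using B tT c S' by (metis)
        next
          case False
          then have "t' \<in> T" using tt T'_def by simp
          then show ?thesis using A tT c S' by simp
        qed
      qed
    qed
    ultimately have "card T' \<le> 1 + (\<Delta> - 1) * card R'" using insert.IH insert.prems(1) by auto
    moreover have "card T' = card T + 1" using T'_def finT vS TS by (metis Suc_eq_plus1 card_insert_disjoint subsetD)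
    ultimately show ?thesis using insert.hyps by auto
  next
    case False
    then obtain t0 where t0: "t0 \<in> T1" by blast
    define T' where "T' = insert t0 (T - T1)"
    have "T' \<subseteq> V - R'" using S' TS T'_def T1T t0 by auto
    moreover have "\<forall>t\<in>T'. \<forall>t'\<in>T'. conn E (V - R') t t' \<longrightarrow> t = t'"
    proof -
      have A: "t = t'" if "t \<in> T - T1" "t' \<in> T" "conn E (insert v S) t t'" for t t'
        using conn_insert[OF sym that(3)] that TS pw unfolding T1_def by blast
      show ?thesis
      proof (intro ballI impI)
        fix t t' assume tt: "t \<in> T'" "t' \<in> T'" and c: "conn E (V - R') t t'"
        have c': "conn E (insert v S) t t'" "conn E (insert v S) t' t"
          using c S' conn_sym[OF sym] by auto
        have t0T: "t0 \<in> T" using t0 T1T by auto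
        show "t = t'"
        proof (cases "t = t0")
          case True
          then show ?thesis
          proof (cases "t' = t0")
            case False then have "t' \<in> T - T1" using tt T'_def by simp
            then show ?thesis using A[OF _ t0T] c'(2) True by (metis DiffI)
          qed simp
        next
          case False then have "t \<in> T - T1" using tt T'_def by simp
          moreover have "t' \<in> T" using tt T'_def t0T by auto
          ultimately show ?thesis using A c'(1) by simp
        qed
      qed
    qed
    ultimately have "card T' \<le> 1 + (\<Delta> - 1) * card R'" using insert.IH insert.prems(1) by auto
    moreover have "card T' = card T - card T1 + 1"
      using T'_def finT T1T t0 card_Diff_subset[of T1 T] finite_subset[OF T1T finT] by auto
    moreover have "card T1 \<le> card T" using card_mono[OF finT T1T] .
    ultimately have h: "card T \<le> (\<Delta> - 1) * card R' + card T1" by linarith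
    obtain k where k: "\<Delta> = Suc k" using D1 by (cases \<Delta>) auto
    have "card T \<le> 1 + (\<Delta> - 1) * Suc (card R')" using h cT1 unfolding k by simp
    then show ?thesis using insert.hyps by simp
  qed
qed

lemma diss_conn:
  assumes sym: "\<forall>u v. E u v \<longrightarrow> E v u" and dis: "dissociation_set V E D"
    and finD: "finite D" and xD: "x \<in> D"
    and c: "conn E D x y"
  shows "x = y \<or> E x y"
  using c unfolding conn_def
proof (induction rule: rtranclp_induct)
  case base then show ?case by simp
next
  case (step y z)
  show ?case
  proof (cases "x = y")
    case True then show ?thesis using step by simp
  next
    case False
    then have xy: "E x y" using step by simp
    have yD: "y \<in> D" "z \<in> D" "E y z" using step(2) by auto
    have fin: "finite {u \<in> D. E y u}" using finD by simp
    have "card {u \<in> D. E y u} \<le> Suc 0" using dis yD unfolding dissociation_set_def by auto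
    then have all: "\<forall>a\<in>{u \<in> D. E y u}. \<forall>b\<in>{u \<in> D. E y u}. a = b"
      using card_le_Suc0_iff_eq[OF fin] by blast
    have "x \<in> {u \<in> D. E y u}" using xD xy sym by blast
    moreover have "z \<in> {u \<in> D. E y u}" using yD by blast
    ultimately have "x = z" using all by blast
    then show ?thesis by simp
  qed
qed

theorem proposition1:
  fixes V :: "'a set" and E :: "'a \<Rightarrow> 'a \<Rightarrow> bool" and \<Delta> :: nat
  assumes "\<Delta> \<ge> 2"
    and "simple_graph V E"
    and "connected_graph V E"
    and "bipartite V E"
    and "max_degree_le V E \<Delta>"
  shows "real (independence_number V E) \<ge>
           1/2 * (1 + 1 / (2 * (real \<Delta> - 1))) * real (dissociation_number V E)
           - 1 / (2 * (real \<Delta> - 1))"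
proof -
  have fin: "finite V" and sym: "\<forall>u v. E u v \<longrightarrow> E v u" and inV: "\<forall>u v. E u v \<longrightarrow> u \<in> V \<and> v \<in> V"
    and irr: "\<forall>v. \<not> E v v"
    using assms(2) unfolding simple_graph_def by auto
  have finI: "finite (card ` {S. independent_set V E S})"
    using fin unfolding independent_set_def by (simp add: finite_subset)
  have finDs: "finite {S. dissociation_set V E S}"
    using fin unfolding dissociation_set_def by (simp add: finite_subset)
  have "{} \<in> {S. dissociation_set V E S}" unfolding dissociation_set_def by simp
  then have "dissociation_number V E \<in> card ` {S. dissociation_set V E S}"
    unfolding dissociation_number_def using finDs by (intro Max_in) auto
  then obtain D where dis: "dissociation_set V E D" and dD: "card D = dissociation_number V E"
    by auto
  have DV: "D \<subseteq> V" using dis unfolding dissociation_set_def by simp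
  have finD: "finite D" using DV fin finite_subset by blast
  have alpha_ge: "card S \<le> independence_number V E" if "independent_set V E S" for S
    unfolding independence_number_def using finI that by (intro Max_ge) auto
  obtain A B where AB: "A \<union> B = V" "A \<inter> B = {}"
    "\<forall>u v. E u v \<longrightarrow> (u \<in> A \<and> v \<in> B) \<or> (u \<in> B \<and> v \<in> A)"
    using assms(4) unfolding bipartite_def by blast
  have "independent_set V E A" using AB unfolding independent_set_def by blast
  moreover have "independent_set V E B" using AB unfolding independent_set_def by blast
  moreover have "card A + card B = card V"
    using AB fin by (metis card_Un_disjoint finite_Un)
  ultimately have n2: "card V \<le> 2 * independence_number V E"
    using alpha_ge[of A] alpha_ge[of B] by linarith
  obtain h where h: "bij_betw h D {0..<card D}" using ex_bij_betw_finite_nat[OF finD] by blast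
  have hinj: "inj_on h D" using h bij_betw_def by blast
  define T where "T = {x\<in>D. \<forall>y\<in>D. E x y \<longrightarrow> h x < h y}"
  have nb: "x = z" if "y \<in> D" "x \<in> D" "z \<in> D" "E y x" "E y z" for x y z
  proof -
    have fin2: "finite {u \<in> D. E y u}" using finD by simp
    have "card {u \<in> D. E y u} \<le> Suc 0" using dis that unfolding dissociation_set_def by auto
    then show ?thesis using card_le_Suc0_iff_eq[OF fin2] that by blast
  qed
  define p where "p x = (SOME y. y \<in> D \<and> E x y \<and> h y < h x)" for x
  have p: "p x \<in> D \<and> E x (p x) \<and> h (p x) < h x" if xT: "x \<in> D - T" for x
  proof -
    obtain y where y: "y \<in> D" "E x y" "\<not> h x < h y" using xT T_def by auto
    have "y \<noteq> x" using irr y by auto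
    then have "h y \<noteq> h x" using hinj y xT by (meson DiffD1 inj_onD)
    then have "y \<in> D \<and> E x y \<and> h y < h x" using y by auto
    then show ?thesis unfolding p_def by (rule someI)
  qed
  have "p ` (D - T) \<subseteq> T"
  proof
    fix y assume "y \<in> p ` (D - T)"
    then obtain x where x: "x \<in> D - T" "y = p x" by blast
    have "y \<in> D" "E x y" "h y < h x" using p[OF x(1)] x by auto
    moreover have "\<forall>z\<in>D. E y z \<longrightarrow> h y < h z"
    proof (intro ballI impI)
      fix z assume "z \<in> D" "E y z"
      then have "z = x" using nb[of y z x] \<open>y \<in> D\<close> x(1) \<open>E x y\<close> sym by blast
      then show "h y < h z" using \<open>h y < h x\<close> by simp
    qed
    ultimately show "y \<in> T" unfolding T_def by blast
  qed
  moreover have "inj_on p (D - T)"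
  proof (rule inj_onI)
    fix x x' assume xx: "x \<in> D - T" "x' \<in> D - T" "p x = p x'"
    show "x = x'" using nb[of "p x" x x'] p[OF xx(1)] p[OF xx(2)] xx sym by auto
  qed
  ultimately have "card (D - T) \<le> card T"
    using card_inj_on_le finD T_def by (metis (no_types, lifting) finite_subset mem_Collect_eq subsetI)
  moreover have "card D = card T + card (D - T)"
    using finD T_def by (metis (no_types, lifting) card_Diff_subset card_mono diff_add_inverse
        le_add_diff_inverse mem_Collect_eq subsetI finite_subset)
  ultimately have dT: "card D \<le> 2 * card T" by linarith
  have TD: "T \<subseteq> D" unfolding T_def by auto
  have VD: "V - (V - D) = D" using DV by auto
  have pw: "\<forall>t\<in>T. \<forall>t'\<in>T. conn E (V - (V - D)) t t' \<longrightarrow> t = t'"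
  proof (intro ballI impI)
    fix t t' assume tt: "t \<in> T" "t' \<in> T" "conn E (V - (V - D)) t t'"
    then have "t = t' \<or> E t t'" using diss_conn[OF sym dis finD, of t t'] VD TD by auto
    moreover have "\<not> E t t'"
    proof
      assume e: "E t t'"
      then have "h t < h t'" using tt T_def by auto
      moreover have "h t' < h t" using tt T_def e sym by auto
      ultimately show False by simp
    qed
    ultimately show "t = t'" by simp
  qed
  have "card T \<le> 1 + (\<Delta> - 1) * card (V - D)"
    using comp_bound[OF assms(2) assms(3) assms(5) _ _, of "V - D" T] assms(1) fin TD DV pw by auto
  moreover have "card (V - D) = card V - card D" using DV fin by (simp add: card_Diff_subset finD)
  moreover have "card D \<le> card V" using DV fin card_mono by blast
  ultimately have key: "card D \<le> 2 + 2 * ((\<Delta> - 1) * (card V - card D))" using dT by simp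
  define k where "k = real \<Delta> - 1"
  define d where "d = real (card D)"
  define n where "n = real (card V)"
  define a where "a = real (independence_number V E)"
  have k1: "k \<ge> 1" using assms(1) k_def by simp
  have key': "d \<le> 2 + 2 * (k * (n - d))"
  proof -
    have "real (card D) \<le> real (2 + 2 * ((\<Delta> - 1) * (card V - card D)))" using key by linarith
    then show ?thesis using assms(1) \<open>card D \<le> card V\<close> unfolding k_def d_def n_def
      by (simp add: of_nat_diff)
  qed
  have na: "n \<le> 2 * a" using n2 unfolding n_def a_def by linarith
  have "k * n \<le> k * (2 * a)" using na k1 by (intro mult_left_mono) auto
  then have main: "(2 * k + 1) * d - 2 \<le> a * (4 * k)" using key' by (simp add: algebra_simps)
  have eq: "1/2 * (1 + 1 / (2 * k)) * d - 1 / (2 * k) = ((2 * k + 1) * d - 2) / (4 * k)"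
    using k1 by (simp add: field_simps)
  have "((2 * k + 1) * d - 2) / (4 * k) \<le> a"
    using main k1 by (simp add: pos_divide_le_eq)
  then show ?thesis using eq dD unfolding k_def d_def a_def by simp
qed

end
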